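(* Let $\mathrm X$ be a locally compact Hausdorff space and $\kappa:\mathrm X\times\mathrm X\to(-\infty,\infty]$ a lower semicontinuous function which is nonnegative unless $\mathrm X\times\mathrm X$ is compact. Assume that $\kappa(x,y)$ is (finite and) continuous for $x\ne y$ and that $\kappa$ has the property $(\infty_{\mathrm X})$: for every $\varepsilon>0$ and every compact $K\subset\mathrm X$ there is a compact $K'\subset\mathrm X$ with $|\kappa(x,y)|<\varepsilon$ for all $x\in K$, $y\in\mathrm X\setminus K'$. Fix a closed set $F\subset\mathrm X$, a closed subset $Q$ of $\mathrm X\setminus F$, and $b\in(0,\infty)$. Then the map $(x,\nu)\mapsto\kappa(x,\nu)=\int\kappa(x,y)\,d\nu(y)$ is continuous on $Q\times\bigl(\mathfrak M^+_F\cap\mathfrak M_b\bigr)$ with respect to the product topology, where $Q$ carries the topology induced from $\mathrm X$ and $\mathfrak M^+_F\cap\mathfrak M_b$ the topology induced by the vague topology of $\mathfrak M$.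
   Context: $\mathfrak M$ is the space of real Radon measures on $\mathrm X$ with the vague topology (pointwise convergence on continuous compactly supported functions). $\mathfrak M^+_F$ is the set of nonnegative Radon measures concentrated on $F$ (for closed $F$: supported in $F$), and $\mathfrak M_b=\{\nu\in\mathfrak M:|\nu|(\mathrm X)\le b\}$. *)

theory Defs
  imports "HOL-Analysis.Analysis"
begin

definition borel_of :: "'a topology \<Rightarrow> 'a measure" where
  "borel_of X = sigma (topspace X) {U. openin X U}"

definition radon_measure :: "'a topology \<Rightarrow> 'a measure \<Rightarrow> bool" where
  "radon_measure X \<nu> \<longleftrightarrow>
     space \<nu> = topspace X \<and> sets \<nu> = sets (borel_of X) \<and>
     (\<forall>K. compactin X K \<longrightarrow> emeasure \<nu> K < \<infinity>) \<and>
     (\<forall>B\<in>sets \<nu>. emeasure \<nu> B = (INF U\<in>{U. openin X U \<and> B \<subseteq> U}. emeasure \<nu> U)) \<and>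
     (\<forall>U. openin X U \<longrightarrow> emeasure \<nu> U = (SUP K\<in>{K. compactin X K \<and> K \<subseteq> U}. emeasure \<nu> K))"

definition radon_pos_F_b :: "'a topology \<Rightarrow> 'a set \<Rightarrow> real \<Rightarrow> 'a measure set" where
  "radon_pos_F_b X F b = {\<nu>. radon_measure X \<nu> \<and> emeasure \<nu> (topspace X - F) = 0 \<and>
      emeasure \<nu> (space \<nu>) \<le> ennreal b}"

definition Cc :: "'a topology \<Rightarrow> ('a \<Rightarrow> real) set" where
  "Cc X = {f. continuous_map X euclideanreal f \<and>
              compactin X (X closure_of {x\<in>topspace X. f x \<noteq> 0})}"

definition vague_topology :: "'a topology \<Rightarrow> 'a measure set \<Rightarrow> 'a measure topology" where
  "vague_topology X M = pullback_topology M (\<lambda>\<nu>. \<lambda>f\<in>Cc X. integral\<^sup>L \<nu> f)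
      (product_topology (\<lambda>_. euclideanreal) (Cc X))"

definition potential :: "('a \<Rightarrow> 'a \<Rightarrow> ereal) \<Rightarrow> 'a \<Rightarrow> 'a measure \<Rightarrow> ereal" where
  "potential \<kappa> x \<nu> = enn2ereal (\<integral>\<^sup>+ y. e2ennreal (\<kappa> x y) \<partial>\<nu>)
                      - enn2ereal (\<integral>\<^sup>+ y. e2ennreal (- \<kappa> x y) \<partial>\<nu>)"

definition lsc_on :: "'a topology \<Rightarrow> ('a \<Rightarrow> ereal) \<Rightarrow> bool" where
  "lsc_on X f \<longleftrightarrow> (\<forall>c::real. openin X {z\<in>topspace X. ereal c < f z})"

end

theory Submission
  imports Defs
begin


lemma space_borel_of: "space (borel_of X) = topspace X"
  unfolding borel_of_def by (simp add: space_measure_of_conv openin_subset subset_iff)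

lemma sets_borel_of: "sets (borel_of X) = sigma_sets (topspace X) {U. openin X U}"
  unfolding borel_of_def by (rule sets_measure_of) (auto dest: openin_subset)

lemma borel_of_open: "openin X U \<Longrightarrow> U \<in> sets (borel_of X)"
  by (simp add: sets_borel_of)

lemma borel_of_closed: "closedin X C \<Longrightarrow> C \<in> sets (borel_of X)"
proof -
  assume "closedin X C"
  then have "C = topspace X - (topspace X - C)" "openin X (topspace X - C)"
    by (auto simp: closedin_def)
  then show ?thesis
    by (metis borel_of_open sets.compl_sets space_borel_of)
qed

lemma piece_borel:
  assumes F: "closedin X F" and h: "continuous_map (subtopology X F) euclideanreal h"
  shows "(\<lambda>y. if y \<in> F then h y else 0) \<in> borel_measurable (borel_of X)"
proof (rule borel_measurableI)
  fix S :: "real set" assume S: "open S"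
  have S': "openin euclideanreal S" using S by simp
  have "openin (subtopology X F) {y \<in> topspace (subtopology X F). h y \<in> S}"
    by (rule openin_continuous_map_preimage[OF h S'])
  then obtain W where W: "openin X W" "{y \<in> topspace (subtopology X F). h y \<in> S} = W \<inter> F"
    unfolding openin_subtopology by blast
  have Fsub: "F \<subseteq> topspace X" using F closedin_subset by blast
  have pt: "(h y \<in> S) = (y \<in> W)" if "y \<in> F" for y
  proof -
    have "y \<in> topspace (subtopology X F)" using that Fsub by auto
    then show ?thesis using W(2) that by (simp add: set_eq_iff) (metis (no_types, lifting) IntI Int_iff mem_Collect_eq)
  qed
  define R where "R = (if 0 \<in> S then topspace X - F else {})"
  have eq: "(\<lambda>y. if y \<in> F then h y else 0) -` S \<inter> space (borel_of X) = (W \<inter> F) \<union> R"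
  proof (rule set_eqI)
    fix y
    show "y \<in> (\<lambda>y. if y \<in> F then h y else 0) -` S \<inter> space (borel_of X) \<longleftrightarrow> y \<in> (W \<inter> F) \<union> R"
    proof (cases "y \<in> F")
      case True
      then show ?thesis using pt[OF True] Fsub by (auto simp: space_borel_of R_def)
    next
      case False
      then show ?thesis by (auto simp: space_borel_of R_def)
    qed
  qed
  have "W \<inter> F \<in> sets (borel_of X)"
    using sets.Int[OF borel_of_open[OF W(1)] borel_of_closed[OF F]] .
  moreover have "R \<in> sets (borel_of X)"
  proof -
    have "topspace X - F \<in> sets (borel_of X)"
      using F by (simp add: borel_of_open closedin_def)
    then show ?thesis by (simp add: R_def)
  qed
  ultimately show "(\<lambda>y. if y \<in> F then h y else 0) -` S \<inter> space (borel_of X) \<in> sets (borel_of X)"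
    unfolding eq by (rule sets.Un)
qed

lemma cont_borel:
  assumes h: "continuous_map X euclideanreal h"
  shows "h \<in> borel_measurable (borel_of X)"
proof (rule borel_measurableI)
  fix S :: "real set" assume S: "open S"
  have S': "openin euclideanreal S" using S by simp
  have "openin X {y \<in> topspace X. h y \<in> S}"
    by (rule openin_continuous_map_preimage[OF h S'])
  moreover have "h -` S \<inter> space (borel_of X) = {y \<in> topspace X. h y \<in> S}"
    by (auto simp: space_borel_of)
  ultimately show "h -` S \<inter> space (borel_of X) \<in> sets (borel_of X)"
    by (simp add: borel_of_open)
qed

lemma int_bound:
  assumes "finite_measure M" "integrable M h" "AE x in M. \<bar>h x\<bar> \<le> c"
  shows "\<bar>integral\<^sup>L M h\<bar> \<le> c * measure M (space M)"
proof -
  interpret finite_measure M by fact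
  have "\<bar>integral\<^sup>L M h\<bar> \<le> integral\<^sup>L M (\<lambda>x. \<bar>h x\<bar>)" by (rule integral_abs_bound)
  also have "\<dots> \<le> integral\<^sup>L M (\<lambda>x. c)"
  proof (rule integral_mono_AE)
    show "integrable M (\<lambda>x. \<bar>h x\<bar>)" using assms(2) by (rule integrable_abs)
    show "integrable M (\<lambda>x. c)" by (rule integrable_const)
    show "AE x in M. \<bar>h x\<bar> \<le> c" by (rule assms(3))
  qed
  also have "\<dots> = c * measure M (space M)" by simp
  finally show ?thesis .
qed



lemma tube:
  fixes f :: "'a \<times> 'b \<Rightarrow> real"
  assumes cont: "continuous_map (subtopology (prod_topology X Y) S) euclideanreal f"
    and x0: "x0 \<in> V" and V: "openin X V" and C: "compactin Y C"
    and VC: "\<And>x y. x \<in> V \<Longrightarrow> y \<in> C \<Longrightarrow> (x, y) \<in> S"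
    and d: "\<delta> > 0"
  shows "\<exists>U. openin X U \<and> x0 \<in> U \<and> U \<subseteq> V \<and> (\<forall>x\<in>U. \<forall>y\<in>C. \<bar>f (x, y) - f (x0, y)\<bar> < \<delta>)"
proof -
  have x0X: "x0 \<in> topspace X" using V x0 openin_subset by blast
  have CY: "C \<subseteq> topspace Y" using C compactin_subset_topspace by blast
  have loc: "\<exists>A B. openin X A \<and> openin Y B \<and> x0 \<in> A \<and> y \<in> B \<and>
       (\<forall>x\<in>A. \<forall>y'\<in>B. (x, y') \<in> S \<longrightarrow> \<bar>f (x, y') - f (x0, y)\<bar> < \<delta>/2)" if y: "y \<in> C" for y
  proof -
    have "openin (subtopology (prod_topology X Y) S)
            {z \<in> topspace (subtopology (prod_topology X Y) S). f z \<in> ball (f (x0, y)) (\<delta>/2)}"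
      by (rule openin_continuous_map_preimage[OF cont]) simp
    then obtain W where W: "openin (prod_topology X Y) W"
      and Oeq: "{z \<in> topspace (subtopology (prod_topology X Y) S). f z \<in> ball (f (x0, y)) (\<delta>/2)} = W \<inter> S"
      unfolding openin_subtopology by blast
    have "(x0, y) \<in> W"
    proof -
      have "(x0, y) \<in> {z \<in> topspace (subtopology (prod_topology X Y) S). f z \<in> ball (f (x0, y)) (\<delta>/2)}"
        using x0X CY y VC[OF x0 y] d by auto
      then show ?thesis using Oeq by blast
    qed
    then obtain A B where AB: "openin X A" "openin Y B" "x0 \<in> A" "y \<in> B" "A \<times> B \<subseteq> W"
      using W by (metis openin_prod_topology_alt)
    have "\<bar>f (x, y') - f (x0, y)\<bar> < \<delta>/2" if "x \<in> A" "y' \<in> B" "(x, y') \<in> S" for x y'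
    proof -
      have "(x, y') \<in> W \<inter> S" using that AB by auto
      then have "f (x, y') \<in> ball (f (x0, y)) (\<delta>/2)" using Oeq by blast
      then show ?thesis by (simp add: dist_real_def abs_minus_commute)
    qed
    then show ?thesis using AB by blast
  qed
  then obtain A B where AB: "\<And>y. y \<in> C \<Longrightarrow> openin X (A y) \<and> openin Y (B y) \<and> x0 \<in> A y \<and> y \<in> B y \<and>
       (\<forall>x\<in>A y. \<forall>y'\<in>B y. (x, y') \<in> S \<longrightarrow> \<bar>f (x, y') - f (x0, y)\<bar> < \<delta>/2)"
    by metis
  have "\<exists>\<F>. finite \<F> \<and> \<F> \<subseteq> B ` C \<and> C \<subseteq> \<Union>\<F>"
    using C AB unfolding compactin_def by (metis (no_types, lifting) UN_I imageE subsetI)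
  then obtain T where T: "T \<subseteq> C" "finite T" "C \<subseteq> \<Union>(B ` T)"
    by (metis finite_subset_image)
  define U where "U = V \<inter> \<Inter>(A ` T)"
  have "openin X U" unfolding U_def using T AB V by (intro openin_Int_Inter) auto
  moreover have "x0 \<in> U" using T AB x0 unfolding U_def by auto
  moreover have "U \<subseteq> V" unfolding U_def by auto
  moreover have "\<bar>f (x, y') - f (x0, y')\<bar> < \<delta>" if xU: "x \<in> U" and yC: "y' \<in> C" for x y'
  proof -
    obtain y where y: "y \<in> T" "y' \<in> B y" using T(3) yC by blast
    have xV: "x \<in> V" "x \<in> A y" using xU y unfolding U_def by auto
    have "\<bar>f (x, y') - f (x0, y)\<bar> < \<delta>/2" using AB[of y] y T xV VC yC by auto
    moreover have "\<bar>f (x0, y') - f (x0, y)\<bar> < \<delta>/2" using AB[of y] y T x0 VC yC by auto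
    ultimately show ?thesis by linarith
  qed
  ultimately show ?thesis by blast
qed



lemma potential_eq:
  fixes k :: "'a \<Rightarrow> real"
  assumes ae: "AE y in \<nu>. \<kappa> x y = ereal (k y)" and int: "integrable \<nu> k"
  shows "potential \<kappa> x \<nu> = ereal (integral\<^sup>L \<nu> k)"
proof -
  have e1: "(\<integral>\<^sup>+ y. e2ennreal (\<kappa> x y) \<partial>\<nu>) = (\<integral>\<^sup>+ y. ennreal (k y) \<partial>\<nu>)"
    by (rule nn_integral_cong_AE) (use ae in auto)
  have e2: "(\<integral>\<^sup>+ y. e2ennreal (- \<kappa> x y) \<partial>\<nu>) = (\<integral>\<^sup>+ y. ennreal (- k y) \<partial>\<nu>)"
    by (rule nn_integral_cong_AE) (use ae in auto)
  have fin: "(\<integral>\<^sup>+ y. ennreal (norm (k y)) \<partial>\<nu>) < \<infinity>"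
    using int by (simp add: integrable_iff_bounded)
  have f1: "(\<integral>\<^sup>+ y. ennreal (k y) \<partial>\<nu>) < \<infinity>"
    by (rule le_less_trans[OF nn_integral_mono fin]) (auto intro: ennreal_leI)
  have f2: "(\<integral>\<^sup>+ y. ennreal (- k y) \<partial>\<nu>) < \<infinity>"
    by (rule le_less_trans[OF nn_integral_mono fin]) (auto intro: ennreal_leI)
  have c: "enn2ereal a = ereal (enn2real a)" if "a < \<infinity>" for a :: ennreal
  proof -
    have "enn2ereal a \<noteq> \<infinity>" using that by simp
    moreover have "enn2ereal a \<noteq> -\<infinity>" using enn2ereal_nonneg[of a] by auto
    ultimately have h: "\<bar>enn2ereal a\<bar> \<noteq> \<infinity>" by (cases "enn2ereal a") auto
    show ?thesis unfolding enn2real_def by (rule ereal_real'[OF h, symmetric])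
  qed
  show ?thesis
    unfolding potential_def e1 e2 real_lebesgue_integral_def[OF int]
    using c[OF f1] c[OF f2] by simp
qed

theorem lemma3p5:
  fixes X :: "'a topology" and \<kappa> :: "'a \<Rightarrow> 'a \<Rightarrow> ereal"
    and F Q :: "'a set" and b :: real
  assumes lc: "locally_compact_space X" and haus: "Hausdorff_space X"
    and no_minf: "\<forall>x\<in>topspace X. \<forall>y\<in>topspace X. \<kappa> x y \<noteq> -\<infinity>"
    and lsc: "lsc_on (prod_topology X X) (\<lambda>(x, y). \<kappa> x y)"
    and nonneg: "\<not> compact_space (prod_topology X X) \<longrightarrow>
                   (\<forall>x\<in>topspace X. \<forall>y\<in>topspace X. \<kappa> x y \<ge> 0)"
    and finite_off: "\<forall>x\<in>topspace X. \<forall>y\<in>topspace X. x \<noteq> y \<longrightarrow> \<bar>\<kappa> x y\<bar> \<noteq> \<infinity>"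
    and cont_off: "continuous_map
        (subtopology (prod_topology X X) {(x, y). x \<noteq> y}) euclideanreal
        (\<lambda>(x, y). real_of_ereal (\<kappa> x y))"
    and inf_X: "\<forall>\<epsilon>>0. \<forall>K. compactin X K \<longrightarrow>
        (\<exists>K'. compactin X K' \<and>
           (\<forall>x\<in>K. \<forall>y\<in>topspace X - K'. \<bar>\<kappa> x y\<bar> < ereal \<epsilon>))"
    and F: "closedin X F"
    and Q: "closedin X Q" "Q \<subseteq> topspace X - F"
    and b: "0 < b"
  shows "continuous_map
           (prod_topology (subtopology X Q) (vague_topology X (radon_pos_F_b X F b)))
           (euclidean :: ereal topology)
           (\<lambda>(x, \<nu>). potential \<kappa> x \<nu>)"
proof -
  define M where "M = radon_pos_F_b X F b"
  define Z where "Z = prod_topology (subtopology X Q) (vague_topology X M)"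
  define k where "k x y = (if y \<in> F then real_of_ereal (\<kappa> x y) else 0)" for x y
  define g where "g z = integral\<^sup>L (snd z) (k (fst z))" for z
  have FX: "F \<subseteq> topspace X" using F closedin_subset by blast
  have QX: "Q \<subseteq> topspace X" using Q closedin_subset by blast
  have topM: "topspace (vague_topology X M) = M"
    unfolding vague_topology_def topspace_pullback_topology
    by (auto simp: topspace_product_topology)
  have topZ: "topspace Z = Q \<times> M"
    unfolding Z_def using QX by (auto simp: topM)
  have Mfacts: "finite_measure \<nu> \<and> sets \<nu> = sets (borel_of X) \<and> space \<nu> = topspace X \<and>
      (AE y in \<nu>. y \<in> F) \<and> measure \<nu> (space \<nu>) \<le> b" if "\<nu> \<in> M" for \<nu>
  proof -
    have r: "radon_measure X \<nu>" "emeasure \<nu> (topspace X - F) = 0" "emeasure \<nu> (space \<nu>) \<le> ennreal b"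
      using that by (auto simp: M_def radon_pos_F_b_def)
    have sp: "space \<nu> = topspace X" "sets \<nu> = sets (borel_of X)"
      using r(1) by (auto simp: radon_measure_def)
    have fin: "finite_measure \<nu>"
      by (rule finite_measureI) (use r(3) in \<open>auto simp: top_unique\<close>)
    have "topspace X - F \<in> sets \<nu>"
      using sp F by (simp add: borel_of_open closedin_def)
    then have ae: "AE y in \<nu>. y \<in> F"
      by (intro AE_I'[of "topspace X - F"]) (auto simp: r(2) sp)
    have "measure \<nu> (space \<nu>) \<le> b"
      using r(3) b fin by (simp add: finite_measure.emeasure_eq_measure)
    then show ?thesis using fin sp ae by auto
  qed
  have kc: "continuous_map (subtopology X S) euclideanreal (\<lambda>y. real_of_ereal (\<kappa> x y))"
    if x: "x \<in> topspace X" "x \<notin> S" for x S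
  proof -
    have "continuous_map (subtopology X S) (subtopology (prod_topology X X) {(x, y). x \<noteq> y}) (\<lambda>y. (x, y))"
      unfolding continuous_map_in_subtopology
      using x by (auto intro!: continuous_map_pairedI continuous_map_from_subtopology[OF continuous_map_id])
    from continuous_map_compose[OF this cont_off] show ?thesis by (simp add: o_def)
  qed
  have kmeas: "k x \<in> borel_measurable \<nu>" if "x \<in> topspace X" "x \<notin> F" "\<nu> \<in> M" for x \<nu>
  proof -
    have "k x \<in> borel_measurable (borel_of X)"
      unfolding k_def using piece_borel[OF F kc[OF that(1,2)]] by simp
    then show ?thesis using Mfacts[OF that(3)] measurable_cong_sets by blast
  qed
  have kint: "integrable \<nu> (k x)" if "x \<in> topspace X" "x \<notin> F" "\<nu> \<in> M" "\<forall>y\<in>F. \<bar>k x y\<bar> \<le> c" for x \<nu> c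
  proof -
    interpret finite_measure \<nu> using Mfacts[OF that(3)] by blast
    have "AE y in \<nu>. norm (k x y) \<le> c"
      using Mfacts[OF that(3)] that(4) by auto
    then show ?thesis using kmeas[OF that(1-3)] by (rule integrable_const_bound)
  qed
  have cint: "integrable \<nu> \<psi>" if "continuous_map X euclideanreal \<psi>" "\<forall>y\<in>topspace X. \<bar>\<psi> y\<bar> \<le> c" "\<nu> \<in> M" for \<psi> \<nu> c
  proof -
    interpret finite_measure \<nu> using Mfacts[OF that(3)] by blast
    have m: "\<psi> \<in> borel_measurable \<nu>"
      using cont_borel[OF that(1)] Mfacts[OF that(3)] measurable_cong_sets by blast
    have "AE y in \<nu>. norm (\<psi> y) \<le> c"
      using Mfacts[OF that(3)] that(2) by auto
    then show ?thesis using m by (rule integrable_const_bound)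
  qed
  have ltreal: "\<bar>real_of_ereal a\<bar> < e" if "\<bar>a\<bar> < ereal e" for a e
    using that by (cases a) auto
  have local: "\<exists>U0 \<psi>0 B. openin X U0 \<and> x0 \<in> U0 \<and> U0 \<subseteq> topspace X - F \<and> \<psi>0 \<in> Cc X \<and>
      (\<forall>y\<in>topspace X. \<bar>\<psi>0 y\<bar> \<le> B) \<and> (\<forall>x\<in>U0. \<forall>y\<in>F. \<bar>k x y - \<psi>0 y\<bar> \<le> 2 * e)"
    if x0: "x0 \<in> topspace X" "x0 \<notin> F" and e: "e > 0" for x0 e
  proof -
    have reg: "regular_space X" using lc haus by (rule locally_compact_Hausdorff_imp_regular_space)
    have nb: "neighbourhood_base_of (\<lambda>C. compactin X C \<and> closedin X C) X"
      using lc reg locally_compact_regular_space_neighbourhood_base by blast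
    have "openin X (topspace X - F)" using F by (simp add: closedin_def)
    then obtain V K where VK: "openin X V" "compactin X K" "closedin X K" "x0 \<in> V" "V \<subseteq> K" "K \<subseteq> topspace X - F"
      using nb x0 unfolding neighbourhood_base_of by (metis DiffI)
    obtain K' where K': "compactin X K'" "\<forall>x\<in>K. \<forall>y\<in>topspace X - K'. \<bar>\<kappa> x y\<bar> < ereal e"
      using inf_X e VK(2) by blast
    have K'cl: "closedin X K'" using compactin_imp_closedin[OF haus K'(1)] .
    have cr: "completely_regular_space X"
      using lc haus by (intro locally_compact_regular_imp_completely_regular_space) auto
    have "\<exists>\<phi>::'a\<Rightarrow>real. continuous_map X (top_of_set {0..1}) \<phi> \<and> \<phi> x0 = 0 \<and> \<phi> ` F \<subseteq> {1}"
      using cr F x0 unfolding completely_regular_space_def by blast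
    then obtain \<phi> :: "'a \<Rightarrow> real" where \<phi>: "continuous_map X (top_of_set {0..1}) \<phi>" "\<phi> x0 = 0" "\<phi> ` F \<subseteq> {1}"
      by blast
    have \<phi>c: "continuous_map X euclideanreal \<phi>"
      using \<phi>(1) continuous_map_into_fulltopology by blast
    have \<phi>F: "\<phi> y = 1" if "y \<in> F" for y using \<phi>(3) that by auto
    define T where "T t = t - max (-e) (min e t)" for t :: real
    have Tc: "continuous_map euclideanreal euclideanreal T"
      unfolding T_def by (simp add: continuous_intros)
    have T0: "T t = 0" if "\<bar>t\<bar> < e" for t using that by (auto simp: T_def)
    have Tb: "\<bar>t - T t\<bar> \<le> e" for t using e by (auto simp: T_def)
    define \<psi>0 where "\<psi>0 y = (if \<phi> y \<le> 1/2 then 0 else (2 * \<phi> y - 1) * T (real_of_ereal (\<kappa> x0 y)))" for y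
    define S2 where "S2 = {x \<in> topspace X. 1/2 \<le> \<phi> x}"
    have c2: "continuous_map (subtopology X S2) euclideanreal (\<lambda>y. (2 * \<phi> y - 1) * T (real_of_ereal (\<kappa> x0 y)))"
    proof -
      have "x0 \<notin> S2" using \<phi>(2) by (simp add: S2_def)
      then have a: "continuous_map (subtopology X S2) euclideanreal (\<lambda>y. T (real_of_ereal (\<kappa> x0 y)))"
        using continuous_map_compose[OF kc[OF x0(1)] Tc] by (simp add: o_def)
      have b: "continuous_map (subtopology X S2) euclideanreal \<phi>"
        using \<phi>c by (rule continuous_map_from_subtopology)
      show ?thesis by (intro continuous_map_real_mult continuous_map_diff continuous_map_real_mult a b) auto
    qed
    have \<psi>c: "continuous_map X euclideanreal \<psi>0"
    proof -
      have cq: "continuous_map X euclideanreal (\<lambda>_. 1/2 :: real)" by simp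
      have c1: "continuous_map (subtopology X {x. x \<in> topspace X \<and> \<phi> x \<le> 1/2}) euclideanreal (\<lambda>_. 0::real)"
        by simp
      have c2': "continuous_map (subtopology X {x. x \<in> topspace X \<and> 1/2 \<le> \<phi> x}) euclideanreal
          (\<lambda>y. (2 * \<phi> y - 1) * T (real_of_ereal (\<kappa> x0 y)))"
        using c2 unfolding S2_def by simp
      have "continuous_map X euclideanreal (\<lambda>y. if \<phi> y \<le> 1/2 then 0
              else (2 * \<phi> y - 1) * T (real_of_ereal (\<kappa> x0 y)))"
        using continuous_map_cases_le[OF \<phi>c cq c1 c2'] by simp
      then show ?thesis by (simp add: \<psi>0_def[abs_def])
    qed
    have supp: "{y \<in> topspace X. \<psi>0 y \<noteq> 0} \<subseteq> K'"
    proof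
      fix y assume y: "y \<in> {y \<in> topspace X. \<psi>0 y \<noteq> 0}"
      show "y \<in> K'"
      proof (rule ccontr)
        assume "y \<notin> K'"
        then have "\<bar>\<kappa> x0 y\<bar> < ereal e" using K'(2) VK y by auto
        then have T0': "T (real_of_ereal (\<kappa> x0 y)) = 0" using T0 ltreal by blast
        have "\<psi>0 y = 0" unfolding \<psi>0_def T0' by simp
        then show False using y by simp
      qed
    qed
    have \<psi>Cc: "\<psi>0 \<in> Cc X"
      unfolding Cc_def using \<psi>c closed_compactin[OF K'(1) closure_of_minimal[OF supp K'cl]] by auto
    have "compactin euclideanreal (\<psi>0 ` K')" using image_compactin[OF K'(1) \<psi>c] .
    then obtain B' where B': "\<forall>v\<in>\<psi>0 ` K'. \<bar>v\<bar> \<le> B'"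
      using compact_imp_bounded bounded_real by (metis compactin_euclidean_iff)
    have \<psi>B: "\<forall>y\<in>topspace X. \<bar>\<psi>0 y\<bar> \<le> \<bar>B'\<bar>"
    proof
      fix y assume y: "y \<in> topspace X"
      show "\<bar>\<psi>0 y\<bar> \<le> \<bar>B'\<bar>"
      proof (cases "y \<in> K'")
        case True then show ?thesis using B' by force
      next
        case False then have "\<psi>0 y = 0" using supp y by blast
        then show ?thesis by simp
      qed
    qed
    have CK: "compactin X (K' \<inter> F)" using compact_Int_closedin[OF K'(1) F] .
    obtain U0 where U0: "openin X U0" "x0 \<in> U0" "U0 \<subseteq> V"
      "\<forall>x\<in>U0. \<forall>y\<in>K' \<inter> F. \<bar>(\<lambda>(x, y). real_of_ereal (\<kappa> x y)) (x, y) - (\<lambda>(x, y). real_of_ereal (\<kappa> x y)) (x0, y)\<bar> < e"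
      using tube[OF cont_off VK(4,1) CK _ e] VK by blast
    have U0F: "U0 \<subseteq> topspace X - F" using U0(3) VK by blast
    have est: "\<bar>k x y - \<psi>0 y\<bar> \<le> 2 * e" if x: "x \<in> U0" and y: "y \<in> F" for x y
    proof -
      have yX: "y \<in> topspace X" using y FX by auto
      have xK: "x \<in> K" "x0 \<in> K" using x U0(2,3) VK(5) by auto
      have \<psi>y: "\<psi>0 y = T (real_of_ereal (\<kappa> x0 y))" using \<phi>F[OF y] by (simp add: \<psi>0_def)
      have kxy: "k x y = real_of_ereal (\<kappa> x y)" using y by (simp add: k_def)
      show ?thesis
      proof (cases "y \<in> K'")
        case True
        then have "\<bar>real_of_ereal (\<kappa> x y) - real_of_ereal (\<kappa> x0 y)\<bar> < e" using U0(4) x y by auto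
        moreover have "\<bar>real_of_ereal (\<kappa> x0 y) - T (real_of_ereal (\<kappa> x0 y))\<bar> \<le> e" by (rule Tb)
        ultimately show ?thesis unfolding kxy \<psi>y by arith
      next
        case False
        then have "\<bar>\<kappa> x y\<bar> < ereal e" "\<bar>\<kappa> x0 y\<bar> < ereal e" using K'(2) xK yX by auto
        then have "\<bar>real_of_ereal (\<kappa> x y)\<bar> < e" "T (real_of_ereal (\<kappa> x0 y)) = 0"
          using ltreal T0 by blast+
        then show ?thesis unfolding kxy \<psi>y using e by arith
      qed
    qed
    show ?thesis using U0(1,2) U0F \<psi>Cc \<psi>B est by blast
  qed

  have potg: "potential \<kappa> x \<nu> = ereal (g (x, \<nu>))" if "x \<in> Q" "\<nu> \<in> M" for x \<nu>
  proof -
    have x: "x \<in> topspace X" "x \<notin> F" using that Q QX by auto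
    obtain U0 \<psi>0 B where L: "openin X U0" "x \<in> U0" "\<forall>y\<in>topspace X. \<bar>\<psi>0 y\<bar> \<le> B"
      "\<forall>x\<in>U0. \<forall>y\<in>F. \<bar>k x y - \<psi>0 y\<bar> \<le> 2 * 1"
      using local[OF x, of 1] by auto
    have "\<forall>y\<in>F. \<bar>k x y\<bar> \<le> B + 2"
    proof
      fix y assume "y \<in> F"
      then have "\<bar>\<psi>0 y\<bar> \<le> B" "\<bar>k x y - \<psi>0 y\<bar> \<le> 2 * 1" using L FX by auto
      then show "\<bar>k x y\<bar> \<le> B + 2" by arith
    qed
    then have int: "integrable \<nu> (k x)" using kint[OF x that(2)] by blast
    have "AE y in \<nu>. \<kappa> x y = ereal (k x y)"
      using Mfacts[OF that(2)]
    proof (elim conjE)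
      assume ae: "AE y in \<nu>. y \<in> F"
      show "AE y in \<nu>. \<kappa> x y = ereal (k x y)"
      using ae proof eventually_elim
      case (elim y)
      then have "y \<in> topspace X" "x \<noteq> y" using FX x by auto
      then have "\<bar>\<kappa> x y\<bar> \<noteq> \<infinity>" using finite_off x by auto
      then show ?case using elim by (simp add: k_def ereal_real')
    qed
    qed
    then show ?thesis unfolding g_def using potential_eq[OF _ int] by simp
  qed
  have gcont: "continuous_map Z euclideanreal g"
  proof -
    have "continuous_map Z Met_TC.mtopology g"
      unfolding Met_TC.continuous_map_to_metric
    proof (intro ballI allI impI)
      fix z0 and \<epsilon> :: real
      assume z0: "z0 \<in> topspace Z" and \<epsilon>: "\<epsilon> > 0"
      obtain x0 \<nu>0 where z0eq: "z0 = (x0, \<nu>0)" and x0Q: "x0 \<in> Q" and \<nu>0: "\<nu>0 \<in> M"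
        using z0 topZ by auto
      have x0: "x0 \<in> topspace X" "x0 \<notin> F" using x0Q Q QX by auto
      define e where "e = \<epsilon> / (8 * (b + 1))"
      have e: "e > 0" using \<epsilon> b by (simp add: e_def)
      obtain U0 \<psi>0 B where L: "openin X U0" "x0 \<in> U0" "U0 \<subseteq> topspace X - F" "\<psi>0 \<in> Cc X"
        "\<forall>y\<in>topspace X. \<bar>\<psi>0 y\<bar> \<le> B" "\<forall>x\<in>U0. \<forall>y\<in>F. \<bar>k x y - \<psi>0 y\<bar> \<le> 2 * e"
        using local[OF x0 e] by blast
      have \<psi>c: "continuous_map X euclideanreal \<psi>0" using L(4) by (simp add: Cc_def)
      have est: "\<bar>g (x, \<nu>) - integral\<^sup>L \<nu> \<psi>0\<bar> \<le> 2 * e * b" if x: "x \<in> U0" and \<nu>: "\<nu> \<in> M" for x \<nu>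
      proof -
        have xX: "x \<in> topspace X" "x \<notin> F" using x L(3) by auto
        have mf: "finite_measure \<nu>" "space \<nu> = topspace X" "AE y in \<nu>. y \<in> F" "measure \<nu> (space \<nu>) \<le> b"
          using Mfacts[OF \<nu>] by auto
        have "\<forall>y\<in>F. \<bar>k x y\<bar> \<le> B + 2 * e"
        proof
          fix y assume "y \<in> F"
          then have "\<bar>\<psi>0 y\<bar> \<le> B" "\<bar>k x y - \<psi>0 y\<bar> \<le> 2 * e" using L(5,6) x FX by auto
          then show "\<bar>k x y\<bar> \<le> B + 2 * e" by arith
        qed
        then have i1: "integrable \<nu> (k x)" using kint[OF xX \<nu>] by blast
        have i2: "integrable \<nu> \<psi>0" using cint[OF \<psi>c L(5) \<nu>] .
        have "g (x, \<nu>) - integral\<^sup>L \<nu> \<psi>0 = integral\<^sup>L \<nu> (\<lambda>y. k x y - \<psi>0 y)"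
          unfolding g_def using Bochner_Integration.integral_diff[OF i1 i2] by simp
        moreover have "\<bar>integral\<^sup>L \<nu> (\<lambda>y. k x y - \<psi>0 y)\<bar> \<le> 2 * e * measure \<nu> (space \<nu>)"
        proof (rule int_bound[OF mf(1) Bochner_Integration.integrable_diff[OF i1 i2]])
          show "AE y in \<nu>. \<bar>k x y - \<psi>0 y\<bar> \<le> 2 * e"
            using mf(3) by eventually_elim (use L(6) x in auto)
        qed
        moreover have "2 * e * measure \<nu> (space \<nu>) \<le> 2 * e * b"
          using mf(4) e by (intro mult_left_mono) auto
        ultimately show ?thesis by simp
      qed
      define Wv where "Wv = {\<nu> \<in> M. \<bar>integral\<^sup>L \<nu> \<psi>0 - integral\<^sup>L \<nu>0 \<psi>0\<bar> < \<epsilon>/2}"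
      have Wopen: "openin (vague_topology X M) Wv"
        unfolding vague_topology_def openin_pullback_topology
      proof (intro exI conjI)
        let ?P = "product_topology (\<lambda>_. euclideanreal) (Cc X)"
        show "openin ?P {z \<in> topspace ?P. z \<psi>0 \<in> ball (integral\<^sup>L \<nu>0 \<psi>0) (\<epsilon>/2)}"
          by (rule openin_continuous_map_preimage[OF continuous_map_product_projection[OF L(4)]]) simp
        show "Wv = (\<lambda>\<nu>. \<lambda>f\<in>Cc X. integral\<^sup>L \<nu> f) -` {z \<in> topspace ?P. z \<psi>0 \<in> ball (integral\<^sup>L \<nu>0 \<psi>0) (\<epsilon>/2)} \<inter> M"
        proof (rule set_eqI)
          fix \<nu>
          have t: "(\<lambda>f\<in>Cc X. integral\<^sup>L \<nu> f) \<in> topspace ?P" by simp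
          have v: "(\<lambda>f\<in>Cc X. integral\<^sup>L \<nu> f) \<psi>0 = integral\<^sup>L \<nu> \<psi>0" using L(4) by simp
          have d: "(integral\<^sup>L \<nu> \<psi>0 \<in> ball (integral\<^sup>L \<nu>0 \<psi>0) (\<epsilon>/2)) = (\<bar>integral\<^sup>L \<nu> \<psi>0 - integral\<^sup>L \<nu>0 \<psi>0\<bar> < \<epsilon>/2)"
            by (simp add: dist_real_def abs_minus_commute)
          show "\<nu> \<in> Wv \<longleftrightarrow> \<nu> \<in> (\<lambda>\<nu>. \<lambda>f\<in>Cc X. integral\<^sup>L \<nu> f) -` {z \<in> topspace ?P. z \<psi>0 \<in> ball (integral\<^sup>L \<nu>0 \<psi>0) (\<epsilon>/2)} \<inter> M"
            by (simp only: Wv_def vimage_def mem_Collect_eq Int_iff t v d simp_thms) blast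
        qed
      qed
      define U where "U = (Q \<inter> U0) \<times> Wv"
      have "openin Z U"
      proof -
        have "openin (subtopology X Q) (Q \<inter> U0)" by (rule openin_subtopology_Int2[OF L(1)])
        then show ?thesis unfolding U_def Z_def openin_prod_Times_iff using Wopen by blast
      qed
      moreover have "z0 \<in> U" unfolding U_def Wv_def z0eq using x0Q L(2) \<nu>0 \<epsilon> by simp
      moreover have "g z \<in> Met_TC.mball (g z0) \<epsilon>" if z: "z \<in> U" for z
      proof -
        obtain x \<nu> where zeq: "z = (x, \<nu>)" and x: "x \<in> U0" and \<nu>: "\<nu> \<in> Wv"
          using z unfolding U_def by blast
        have \<nu>M: "\<nu> \<in> M" and cl: "\<bar>integral\<^sup>L \<nu> \<psi>0 - integral\<^sup>L \<nu>0 \<psi>0\<bar> < \<epsilon>/2"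
          using \<nu> unfolding Wv_def by blast+
        have a1: "\<bar>g (x, \<nu>) - integral\<^sup>L \<nu> \<psi>0\<bar> \<le> 2 * e * b" using est[OF x \<nu>M] .
        have a2: "\<bar>g (x0, \<nu>0) - integral\<^sup>L \<nu>0 \<psi>0\<bar> \<le> 2 * e * b" using est[OF L(2) \<nu>0] .
        have ineq: "4 * e * b \<le> \<epsilon> / 2"
        proof -
          have "4 * e * b = \<epsilon> * b / (2 * (b + 1))" unfolding e_def using b by (simp add: field_simps)
          also have "\<dots> \<le> \<epsilon> / 2" using b \<epsilon> by (simp add: field_simps)
          finally show ?thesis .
        qed
        then have "\<bar>g (x, \<nu>) - g (x0, \<nu>0)\<bar> < \<epsilon>" using a1 a2 cl ineq unfolding abs_le_iff abs_less_iff by linarith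
        then show ?thesis unfolding zeq z0eq by (simp add: dist_real_def)
      qed
      ultimately show "\<exists>U. openin Z U \<and> z0 \<in> U \<and> (\<forall>y\<in>U. g y \<in> Met_TC.mball (g z0) \<epsilon>)"
        by blast
    qed
    then show ?thesis by simp
  qed

  have ereal_cont: "continuous_map euclideanreal (euclidean :: ereal topology) ereal"
    by (simp add: continuous_on_ereal continuous_on_id)
  have "continuous_map Z (euclidean :: ereal topology) (ereal \<circ> g)"
    using continuous_map_compose[OF gcont ereal_cont] .
  then have "continuous_map Z (euclidean :: ereal topology) (\<lambda>(x, \<nu>). potential \<kappa> x \<nu>)"
    by (rule continuous_map_eq) (auto simp: topZ potg)
  then show ?thesis unfolding Z_def M_def .
qed

end
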